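(* For every $f:\{0,1\}^n\to\{-1,1\}$, $$\mathbb E_{x,y}\sum_{\alpha,\beta\in\{0,1\}^n}\hat{f_x}^2(\alpha)\,\hat{f_y}^2(\beta)\,\widehat{f_{x+y}}^2(\alpha+\beta)=\mathbb E_y\sum_{\alpha\in\{0,1\}^n}\hat{f_y}^6(\alpha),$$ with $x,y$ independent uniform in $\{0,1\}^n$.
   Context: $\{0,1\}^n$ is identified with $\mathbb F_2^n$. $\hat h(\alpha)=\mathbb E_z h(z)(-1)^{\langle\alpha,z\rangle}$ with $\langle\alpha,z\rangle=\sum\alpha_iz_i\bmod 2$; $f_y(x)=f(x)f(x+y)$. *)

theory Defs
  imports Complex_Main
begin

text \<open>Points of {0,1}^n = F_2^n are modelled as functions 'n \<Rightarrow> bool for a finite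
  index type 'n (so n = CARD('n)); True stands for 1.\<close>

definition vadd :: "('n \<Rightarrow> bool) \<Rightarrow> ('n \<Rightarrow> bool) \<Rightarrow> ('n \<Rightarrow> bool)" where
  "vadd x y = (\<lambda>i. x i \<noteq> y i)"

definition ip :: "('n::finite \<Rightarrow> bool) \<Rightarrow> ('n \<Rightarrow> bool) \<Rightarrow> bool" where
  "ip a z = odd (card {i. a i \<and> z i})"

definition chr :: "('n::finite \<Rightarrow> bool) \<Rightarrow> ('n \<Rightarrow> bool) \<Rightarrow> real" where
  "chr a z = (if ip a z then -1 else 1)"

definition expect :: "(('n::finite \<Rightarrow> bool) \<Rightarrow> real) \<Rightarrow> real" where
  "expect h = (\<Sum>z\<in>UNIV. h z) / real (card (UNIV :: ('n \<Rightarrow> bool) set))"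

definition fourier :: "(('n::finite \<Rightarrow> bool) \<Rightarrow> real) \<Rightarrow> ('n \<Rightarrow> bool) \<Rightarrow> real" where
  "fourier h a = expect (\<lambda>z. h z * chr a z)"

definition fder :: "(('n \<Rightarrow> bool) \<Rightarrow> real) \<Rightarrow> ('n \<Rightarrow> bool) \<Rightarrow> ('n \<Rightarrow> bool) \<Rightarrow> real" where
  "fder f y = (\<lambda>x. f x * f (vadd x y))"

end

theory Submission imports Defs begin

lemma vadd_comm: "vadd x y = vadd y x" unfolding vadd_def by auto
lemma vadd_assoc: "vadd (vadd x y) z = vadd x (vadd y z)" unfolding vadd_def by auto
lemma vadd_cancel: "vadd x (vadd x y) = y" unfolding vadd_def by auto
lemma vadd_eq0: "vadd x y = (\<lambda>_. False) \<longleftrightarrow> x = y" unfolding vadd_def by (auto simp: fun_eq_iff)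

lemma ip_vadd: "ip (a::'n::finite\<Rightarrow>bool) (vadd u w) = (ip a u \<noteq> ip a w)"
proof -
  define A where "A = {i. a i \<and> u i}"
  define B where "B = {i. a i \<and> w i}"
  have C: "{i. a i \<and> vadd u w i} = (A \<union> B) - (A \<inter> B)"
    unfolding A_def B_def vadd_def by auto
  have f: "finite A" "finite B" by auto
  have "card (A \<union> B) + card (A \<inter> B) = card A + card B" using card_Un_Int[OF f] by simp
  moreover have "card ((A \<union> B) - (A \<inter> B)) = card (A \<union> B) - card (A \<inter> B)"
    by (rule card_Diff_subset) auto
  moreover have "card (A \<inter> B) \<le> card (A \<union> B)" by (rule card_mono) auto
  ultimately have "card {i. a i \<and> vadd u w i} + 2 * card (A \<inter> B) = card A + card B"
    using C by simp
  then show ?thesis unfolding ip_def A_def[symmetric] B_def[symmetric]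
    by (metis even_add even_mult_iff even_numeral)
qed

lemma chr_vadd: "chr (a::'n::finite\<Rightarrow>bool) (vadd u w) = chr a u * chr a w"
  unfolding chr_def by (auto simp: ip_vadd)

lemma chr_sym: "chr (a::'n::finite\<Rightarrow>bool) z = chr z a"
  unfolding chr_def ip_def by (simp add: conj_commute)

lemma chr_sq: "chr (a::'n::finite\<Rightarrow>bool) u * chr a u = 1"
  unfolding chr_def by auto

lemma ortho: "(\<Sum>\<alpha>\<in>UNIV. chr \<alpha> (u::'n::finite\<Rightarrow>bool)) =
   (if u = (\<lambda>_. False) then real (card (UNIV :: ('n\<Rightarrow>bool) set)) else 0)"
proof (cases "u = (\<lambda>_. False)")
  case True
  have "chr \<alpha> u = 1" for \<alpha> unfolding True chr_def ip_def by simp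
  then show ?thesis using True by simp
next
  case False
  then obtain i where ui: "u i" by auto
  define e where "e = (\<lambda>j. j = i)"
  have ce: "chr u e = -1"
  proof -
    have "{j. u j \<and> e j} = {i}" unfolding e_def using ui by auto
    then show ?thesis unfolding chr_def ip_def by simp
  qed
  have "(\<Sum>\<alpha>\<in>UNIV. chr \<alpha> u) = (\<Sum>\<alpha>\<in>UNIV. chr (vadd e \<alpha>) u)"
    by (rule sum.reindex_bij_witness[where i="vadd e" and j="vadd e"]) (auto simp: vadd_cancel)
  also have "\<dots> = - (\<Sum>\<alpha>\<in>UNIV. chr \<alpha> u)"
    by (simp add: chr_sym[of _ u] chr_vadd ce sum_negf)
  finally show ?thesis using False by simp
qed

lemma ortho2: "(\<Sum>\<alpha>\<in>UNIV. chr \<alpha> (u::'n::finite\<Rightarrow>bool) * chr \<alpha> w) =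
   (if u = w then real (card (UNIV :: ('n\<Rightarrow>bool) set)) else 0)"
  by (simp add: chr_vadd[symmetric] ortho vadd_eq0)

lemma parseval: "(\<Sum>\<beta>\<in>UNIV. (\<Sum>v\<in>UNIV. chr \<beta> (v::'n::finite\<Rightarrow>bool) * p v) * (\<Sum>w\<in>UNIV. chr \<beta> w * q w))
   = real (card (UNIV :: ('n\<Rightarrow>bool) set)) * (\<Sum>w\<in>UNIV. p w * q w)"
proof -
  have "(\<Sum>\<beta>\<in>UNIV. (\<Sum>v\<in>UNIV. chr \<beta> (v::'n::finite\<Rightarrow>bool) * p v) * (\<Sum>w\<in>UNIV. chr \<beta> w * q w))
     = (\<Sum>\<beta>\<in>UNIV. \<Sum>v\<in>UNIV. \<Sum>w\<in>UNIV. p v * q w * (chr \<beta> v * chr \<beta> w))"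
    by (simp add: sum_product algebra_simps)
  also have "\<dots> = (\<Sum>v\<in>UNIV. \<Sum>\<beta>\<in>UNIV. \<Sum>w\<in>UNIV. p v * q w * (chr \<beta> v * chr \<beta> w))"
    by (rule sum.swap)
  also have "\<dots> = (\<Sum>v\<in>UNIV. \<Sum>w\<in>UNIV. \<Sum>\<beta>\<in>UNIV. p v * q w * (chr \<beta> v * chr \<beta> w))"
    by (rule sum.cong[OF refl]) (rule sum.swap)
  also have "\<dots> = (\<Sum>v\<in>UNIV. \<Sum>w\<in>UNIV. p v * q w * (\<Sum>\<beta>\<in>UNIV. chr \<beta> v * chr \<beta> w))"
    by (simp add: sum_distrib_left)
  also have "\<dots> = real (card (UNIV :: ('n\<Rightarrow>bool) set)) * (\<Sum>w\<in>UNIV. p w * q w)"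
    by (simp add: ortho2 sum_distrib_left algebra_simps if_distrib cong: if_cong)
  finally show ?thesis .
qed

lemma square: "(\<Sum>u\<in>UNIV. chr \<alpha> (u::'n::finite\<Rightarrow>bool) * a u)^2
   = (\<Sum>s\<in>UNIV. chr \<alpha> s * (\<Sum>u\<in>UNIV. a u * a (vadd u s)))"
proof -
  have "(\<Sum>u\<in>UNIV. chr \<alpha> (u::'n::finite\<Rightarrow>bool) * a u)^2
    = (\<Sum>u\<in>UNIV. chr \<alpha> u * a u * (\<Sum>v\<in>UNIV. chr \<alpha> v * a v))"
    by (simp add: power2_eq_square sum_distrib_right)
  also have "\<dots> = (\<Sum>u\<in>UNIV. chr \<alpha> u * a u * (\<Sum>s\<in>UNIV. chr \<alpha> (vadd u s) * a (vadd u s)))"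
  proof (rule sum.cong[OF refl])
    fix u
    have "(\<Sum>v\<in>UNIV. chr \<alpha> v * a v) = (\<Sum>s\<in>UNIV. chr \<alpha> (vadd u s) * a (vadd u s))"
      by (rule sum.reindex_bij_witness[where i="vadd u" and j="vadd u"]) (auto simp: vadd_cancel)
    then show "chr \<alpha> u * a u * (\<Sum>v\<in>UNIV. chr \<alpha> v * a v) = chr \<alpha> u * a u * (\<Sum>s\<in>UNIV. chr \<alpha> (vadd u s) * a (vadd u s))" by simp
  qed
  also have "\<dots> = (\<Sum>u\<in>UNIV. \<Sum>s\<in>UNIV. chr \<alpha> s * (a u * a (vadd u s)))"
  proof -
    have key: "chr \<alpha> u * a u * (chr \<alpha> (vadd u s) * a (vadd u s)) = chr \<alpha> s * (a u * a (vadd u s))" for u s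
    proof -
      have "chr \<alpha> u * a u * (chr \<alpha> (vadd u s) * a (vadd u s)) = (chr \<alpha> u * chr \<alpha> u) * chr \<alpha> s * (a u * a (vadd u s))"
        by (simp add: chr_vadd algebra_simps)
      then show ?thesis by (simp add: chr_sq)
    qed
    show ?thesis unfolding sum_distrib_left by (intro sum.cong refl) (rule key)
  qed
  also have "\<dots> = (\<Sum>s\<in>UNIV. chr \<alpha> s * (\<Sum>u\<in>UNIV. a u * a (vadd u s)))"
    unfolding sum_distrib_left by (rule sum.swap)
  finally show ?thesis .
qed


lemma triple: "(\<Sum>\<alpha>\<in>UNIV. \<Sum>\<beta>\<in>UNIV. (\<Sum>u\<in>UNIV. chr \<alpha> (u::'n::finite\<Rightarrow>bool) * a u) *
      (\<Sum>v\<in>UNIV. chr \<beta> v * b v) * (\<Sum>w\<in>UNIV. chr (vadd \<alpha> \<beta>) w * c w))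
   = real (card (UNIV :: ('n\<Rightarrow>bool) set))^2 * (\<Sum>w\<in>UNIV. a w * b w * c w)"
proof -
  let ?N = "real (card (UNIV :: ('n\<Rightarrow>bool) set))"
  have inner: "(\<Sum>\<beta>\<in>UNIV. (\<Sum>v\<in>UNIV. chr \<beta> v * b v) * (\<Sum>w\<in>UNIV. chr (vadd \<alpha> \<beta>) w * c w))
     = ?N * (\<Sum>w\<in>UNIV. chr \<alpha> w * (b w * c w))" for \<alpha>
  proof -
    have "(\<Sum>w\<in>UNIV. chr (vadd \<alpha> \<beta>) w * c w) = (\<Sum>w\<in>UNIV. chr \<beta> w * (chr \<alpha> w * c w))" for \<beta>
      by (rule sum.cong[OF refl]) (simp add: chr_sym[of "vadd \<alpha> \<beta>"] chr_vadd chr_sym[of _ \<alpha>] chr_sym[of _ \<beta>])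
    then have "(\<Sum>\<beta>\<in>UNIV. (\<Sum>v\<in>UNIV. chr \<beta> v * b v) * (\<Sum>w\<in>UNIV. chr (vadd \<alpha> \<beta>) w * c w))
       = (\<Sum>\<beta>\<in>UNIV. (\<Sum>v\<in>UNIV. chr \<beta> v * b v) * (\<Sum>w\<in>UNIV. chr \<beta> w * (chr \<alpha> w * c w)))"
      by simp
    also have "\<dots> = ?N * (\<Sum>w\<in>UNIV. b w * (chr \<alpha> w * c w))" by (rule parseval)
    finally show ?thesis by (simp add: algebra_simps)
  qed
  have "(\<Sum>\<alpha>\<in>UNIV. \<Sum>\<beta>\<in>UNIV. (\<Sum>u\<in>UNIV. chr \<alpha> (u::'n::finite\<Rightarrow>bool) * a u) *
      (\<Sum>v\<in>UNIV. chr \<beta> v * b v) * (\<Sum>w\<in>UNIV. chr (vadd \<alpha> \<beta>) w * c w))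
    = (\<Sum>\<alpha>\<in>UNIV. (\<Sum>u\<in>UNIV. chr \<alpha> (u::'n::finite\<Rightarrow>bool) * a u) *
      (\<Sum>\<beta>\<in>UNIV. (\<Sum>v\<in>UNIV. chr \<beta> v * b v) * (\<Sum>w\<in>UNIV. chr (vadd \<alpha> \<beta>) w * c w)))"
    by (simp only: mult.assoc sum_distrib_left[symmetric])
  also have "\<dots> = (\<Sum>\<alpha>\<in>UNIV. ?N * ((\<Sum>u\<in>UNIV. chr \<alpha> (u::'n::finite\<Rightarrow>bool) * a u) *
      (\<Sum>w\<in>UNIV. chr \<alpha> w * (b w * c w))))"
    by (rule sum.cong[OF refl]) (simp only: inner, simp only: mult_ac)
  also have "\<dots> = ?N * (\<Sum>\<alpha>\<in>UNIV. (\<Sum>u\<in>UNIV. chr \<alpha> (u::'n::finite\<Rightarrow>bool) * a u) *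
      (\<Sum>w\<in>UNIV. chr \<alpha> w * (b w * c w)))"
    by (rule sum_distrib_left[symmetric])
  also have "\<dots> = ?N * (?N * (\<Sum>w\<in>UNIV. a w * (b w * c w)))" by (simp only: parseval)
  finally show ?thesis by (simp add: power2_eq_square algebra_simps)
qed

lemma cube: "(\<Sum>\<alpha>\<in>UNIV. (\<Sum>u\<in>UNIV. chr \<alpha> (u::'n::finite\<Rightarrow>bool) * a u)^3)
   = real (card (UNIV :: ('n\<Rightarrow>bool) set)) * (\<Sum>s\<in>UNIV. (\<Sum>u\<in>UNIV. a u * a (vadd u s)) * a s)"
proof -
  have "(\<Sum>\<alpha>\<in>UNIV. (\<Sum>u\<in>UNIV. chr \<alpha> (u::'n::finite\<Rightarrow>bool) * a u)^3)
     = (\<Sum>\<alpha>\<in>UNIV. (\<Sum>u\<in>UNIV. chr \<alpha> (u::'n::finite\<Rightarrow>bool) * a u)^2 * (\<Sum>u\<in>UNIV. chr \<alpha> u * a u))"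
    by (simp add: power3_eq_cube power2_eq_square)
  also have "\<dots> = (\<Sum>\<alpha>\<in>UNIV. (\<Sum>s\<in>UNIV. chr \<alpha> s * (\<Sum>u\<in>UNIV. a u * a (vadd u s))) * (\<Sum>u\<in>UNIV. chr \<alpha> u * a u))"
    by (simp only: square)
  also have "\<dots> = real (card (UNIV :: ('n\<Rightarrow>bool) set)) * (\<Sum>s\<in>UNIV. (\<Sum>u\<in>UNIV. a u * a (vadd u s)) * a s)"
    by (rule parseval)
  finally show ?thesis .
qed


theorem lemma6p5:
  fixes f :: "('n::finite \<Rightarrow> bool) \<Rightarrow> real"
  assumes "\<forall>x. f x = 1 \<or> f x = -1"
  shows "expect (\<lambda>x. expect (\<lambda>y.
           \<Sum>\<alpha>\<in>UNIV. \<Sum>\<beta>\<in>UNIV.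
             (fourier (fder f x) \<alpha>)^2 * (fourier (fder f y) \<beta>)^2
             * (fourier (fder f (vadd x y)) (vadd \<alpha> \<beta>))^2))
       = expect (\<lambda>y. \<Sum>\<alpha>\<in>UNIV. (fourier (fder f y) \<alpha>)^6)"
proof -
  let ?N = "real (card (UNIV :: ('n\<Rightarrow>bool) set))"
  have Npos: "?N > 0" by (simp add: card_gt_0_iff)
  define K where "K y s = (\<Sum>z\<in>UNIV. fder f y z * fder f y (vadd z s))" for y s
  have Ksym: "K y s = K s y" for y s
  proof -
    have e: "vadd (vadd z s) y = vadd (vadd z y) s" for z unfolding vadd_def by auto
    show ?thesis unfolding K_def fder_def
      by (rule sum.cong[OF refl]) (simp add: e mult_ac)
  qed
  define S where "S y \<alpha> = (\<Sum>s\<in>UNIV. chr \<alpha> s * K y s)" for y \<alpha>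
  have F2: "(fourier (fder f y) \<alpha>)^2 = S y \<alpha> / ?N^2" for y \<alpha>
  proof -
    have "(fourier (fder f y) \<alpha>)^2 = (\<Sum>z\<in>UNIV. chr \<alpha> z * fder f y z)^2 / ?N^2"
      unfolding fourier_def expect_def by (simp add: power_divide mult.commute)
    also have "\<dots> = S y \<alpha> / ?N^2" unfolding square S_def K_def ..
    finally show ?thesis .
  qed
  have L: "(\<Sum>\<alpha>\<in>UNIV. \<Sum>\<beta>\<in>UNIV.
             (fourier (fder f x) \<alpha>)^2 * (fourier (fder f y) \<beta>)^2
             * (fourier (fder f (vadd x y)) (vadd \<alpha> \<beta>))^2)
     = ?N^2 * (\<Sum>w\<in>UNIV. K x w * K y w * K (vadd x y) w) / ?N^6" for x y
  proof -
    have "(\<Sum>\<alpha>\<in>UNIV. \<Sum>\<beta>\<in>UNIV.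
             (fourier (fder f x) \<alpha>)^2 * (fourier (fder f y) \<beta>)^2
             * (fourier (fder f (vadd x y)) (vadd \<alpha> \<beta>))^2)
       = (\<Sum>\<alpha>\<in>UNIV. \<Sum>\<beta>\<in>UNIV. S x \<alpha> * S y \<beta> * S (vadd x y) (vadd \<alpha> \<beta>)) / ?N^6"
      by (simp add: F2 sum_divide_distrib)
    also have "\<dots> = ?N^2 * (\<Sum>w\<in>UNIV. K x w * K y w * K (vadd x y) w) / ?N^6"
      unfolding S_def triple ..
    finally show ?thesis .
  qed
  have R: "(\<Sum>\<alpha>\<in>UNIV. (fourier (fder f y) \<alpha>)^6)
     = ?N * (\<Sum>s\<in>UNIV. (\<Sum>u\<in>UNIV. K y u * K y (vadd u s)) * K y s) / ?N^6" for y
  proof -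
    have "(fourier (fder f y) \<alpha>)^6 = ((fourier (fder f y) \<alpha>)^2)^3" for \<alpha>
      by (simp flip: power_mult)
    then have "(\<Sum>\<alpha>\<in>UNIV. (fourier (fder f y) \<alpha>)^6) = (\<Sum>\<alpha>\<in>UNIV. (S y \<alpha>)^3) / ?N^6"
      by (simp add: F2 sum_divide_distrib power_divide flip: power_mult)
    also have "\<dots> = ?N * (\<Sum>s\<in>UNIV. (\<Sum>u\<in>UNIV. K y u * K y (vadd u s)) * K y s) / ?N^6"
      unfolding S_def cube ..
    finally show ?thesis .
  qed
  define Q where "Q = (\<Sum>w\<in>UNIV. \<Sum>x\<in>UNIV. \<Sum>y\<in>UNIV. K w x * K w y * K w (vadd x y))"
  have QL: "(\<Sum>x\<in>UNIV. \<Sum>y\<in>UNIV. \<Sum>w\<in>UNIV. K x w * K y w * K (vadd x y) w) = Q"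
  proof -
    have "(\<Sum>x\<in>UNIV. \<Sum>y\<in>UNIV. \<Sum>w\<in>UNIV. K x w * K y w * K (vadd x y) w)
       = (\<Sum>x\<in>UNIV. \<Sum>y\<in>UNIV. \<Sum>w\<in>UNIV. K w x * K w y * K w (vadd x y))"
      by (simp add: Ksym[of _ w for w])
    also have "\<dots> = (\<Sum>x\<in>UNIV. \<Sum>w\<in>UNIV. \<Sum>y\<in>UNIV. K w x * K w y * K w (vadd x y))"
      by (rule sum.cong[OF refl]) (rule sum.swap)
    also have "\<dots> = Q" unfolding Q_def by (rule sum.swap)
    finally show ?thesis .
  qed
  have QR: "(\<Sum>y\<in>UNIV. \<Sum>s\<in>UNIV. (\<Sum>u\<in>UNIV. K y u * K y (vadd u s)) * K y s) = Q"
  proof -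
    have "(\<Sum>y\<in>UNIV. \<Sum>s\<in>UNIV. (\<Sum>u\<in>UNIV. K y u * K y (vadd u s)) * K y s)
      = (\<Sum>w\<in>UNIV. \<Sum>x\<in>UNIV. \<Sum>y\<in>UNIV. K w y * K w (vadd x y) * K w x)"
      by (simp add: sum_distrib_right vadd_comm)
    also have "\<dots> = Q" unfolding Q_def
      by (rule sum.cong[OF refl], rule sum.cong[OF refl], rule sum.cong[OF refl]) (simp add: mult_ac)
    finally show ?thesis .
  qed
  have "expect (\<lambda>x. expect (\<lambda>y.
           \<Sum>\<alpha>\<in>UNIV. \<Sum>\<beta>\<in>UNIV.
             (fourier (fder f x) \<alpha>)^2 * (fourier (fder f y) \<beta>)^2
             * (fourier (fder f (vadd x y)) (vadd \<alpha> \<beta>))^2))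
     = (\<Sum>x\<in>UNIV. \<Sum>y\<in>UNIV. \<Sum>w\<in>UNIV. K x w * K y w * K (vadd x y) w) / ?N^6"
    unfolding expect_def L using Npos
    by (simp add: sum_divide_distrib[symmetric] sum_distrib_left[symmetric] power_def)
  also have "\<dots> = Q / ?N^6" by (simp only: QL)
  also have "\<dots> = (\<Sum>y\<in>UNIV. \<Sum>s\<in>UNIV. (\<Sum>u\<in>UNIV. K y u * K y (vadd u s)) * K y s) / ?N^6"
    by (simp only: QR)
  also have "\<dots> = expect (\<lambda>y. \<Sum>\<alpha>\<in>UNIV. (fourier (fder f y) \<alpha>)^6)"
    unfolding expect_def R using Npos
    by (simp add: sum_divide_distrib[symmetric] sum_distrib_left[symmetric] power_def)
  finally show ?thesis .
qed

end
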